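(* Let $d_{n,k}$ be the number of matchings of size $n$ with exactly $k$ occurrences of the endhered pattern $132$. Then, as formal power series, $$D(z,u):=\sum_{n\ge0}\sum_{k=0}^{n}d_{n,k}z^nu^k=F\big(z+(u-1)z^3\big)=\sum_{n\ge0}(2n-1)!!\,\big(z+(u-1)z^3\big)^n,$$ where $F(z)=\sum_{n\ge0}(2n-1)!!\,z^n$ and $(-1)!!=1$.
   Context: A matching of size $n$ is a set of $n$ arcs $(a,b)$ with $1\le a<b\le 2n$ such that each point of $\{1,\dots,2n\}$ belongs to exactly one arc (the empty matching has size $0$). For a permutation $\pi=\pi_1\dots\pi_p$ of $\{1,\dots,p\}$, a matching $\mu$ contains the endhered pattern $\pi$ at position $(i+1,j+1)$ (integers $i\ge0$, $j\ge i+p$) if for each $s=1,\dots,p$ the pair $(i+s,\,j+\pi^{-1}(s))$ is an arc of $\mu$. For $\pi=132$ this means $\mu$ has the three arcs $(i+1,j+1),(i+2,j+3),(i+3,j+2)$. The number of occurrences is the number of positions $(i+1,j+1)$ at which $\mu$ contains $\pi$. *)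

theory Defs
  imports "HOL-Computational_Algebra.Formal_Power_Series" "HOL-Computational_Algebra.Polynomial"
begin

definition is_matching :: "nat \<Rightarrow> (nat \<times> nat) set \<Rightarrow> bool" where
  "is_matching n M \<longleftrightarrow>
     M \<subseteq> {(a, b). 1 \<le> a \<and> a < b \<and> b \<le> 2 * n} \<and>
     (\<forall>x \<in> {1..2 * n}. \<exists>!p. p \<in> M \<and> (fst p = x \<or> snd p = x))"

definition matchings :: "nat \<Rightarrow> (nat \<times> nat) set set" where
  "matchings n = {M. is_matching n M}"

definition occ132 :: "(nat \<times> nat) set \<Rightarrow> (nat \<times> nat) set" where
  "occ132 M = {(i, j). j \<ge> i + 3 \<and> (i + 1, j + 1) \<in> M \<and> (i + 2, j + 3) \<in> M \<and> (i + 3, j + 2) \<in> M}"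

definition num_occ132 :: "(nat \<times> nat) set \<Rightarrow> nat" where
  "num_occ132 M = card (occ132 M)"

definition d132 :: "nat \<Rightarrow> nat \<Rightarrow> nat" where
  "d132 n k = card {M \<in> matchings n. num_occ132 M = k}"

definition odd_dfact :: "nat \<Rightarrow> nat" where
  "odd_dfact n = (\<Prod>i = 1..n. 2 * i - 1)"

definition F_fps :: "int poly fps" where
  "F_fps = Abs_fps (\<lambda>n. of_nat (odd_dfact n))"

text \<open>D(z,u) = sum_n sum_{k=0}^n d_{n,k} z^n u^k, as a power series in z over Z[u].\<close>
definition D_fps :: "int poly fps" where
  "D_fps = Abs_fps (\<lambda>n. \<Sum>k = 0..n. monom (int (d132 n k)) k)"

end

theory Submission
  imports Defs
begin


definition mo :: "nat set \<Rightarrow> (nat \<times> nat) set \<Rightarrow> bool" where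
  "mo A M \<longleftrightarrow> (\<forall>p\<in>M. fst p < snd p \<and> fst p \<in> A \<and> snd p \<in> A) \<and>
     (\<forall>x\<in>A. \<exists>!p. p \<in> M \<and> (fst p = x \<or> snd p = x))"

definition mapM :: "(nat \<Rightarrow> nat) \<Rightarrow> (nat \<times> nat) set \<Rightarrow> (nat \<times> nat) set" where
  "mapM f M = (\<lambda>(a, b). (f a, f b)) ` M"

definition pts :: "(nat \<times> nat) set \<Rightarrow> nat set" where
  "pts K = fst ` K \<union> snd ` K"

lemma is_matching_mo: "is_matching n M \<longleftrightarrow> mo {1..2*n} M"
proof -
  have e: "(M \<subseteq> {(a, b). 1 \<le> a \<and> a < b \<and> b \<le> 2 * n}) =
    (\<forall>p\<in>M. fst p < snd p \<and> fst p \<in> {1..2*n} \<and> snd p \<in> {1..2*n})"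
    by fastforce
  show ?thesis unfolding is_matching_def mo_def by (simp only: e)
qed

lemma mo_arcp: "mo A M \<Longrightarrow> p \<in> M \<Longrightarrow> fst p < snd p \<and> fst p \<in> A \<and> snd p \<in> A"
  unfolding mo_def by blast

lemma mo_arc: "mo A M \<Longrightarrow> (a, b) \<in> M \<Longrightarrow> a < b \<and> a \<in> A \<and> b \<in> A"
  using mo_arcp by fastforce

lemma mo_cover: "mo A M \<Longrightarrow> x \<in> A \<Longrightarrow> \<exists>p\<in>M. fst p = x \<or> snd p = x"
  unfolding mo_def by blast

lemma mo_unique: assumes "mo A M" "p \<in> M" "q \<in> M"
  "fst p = fst q \<or> fst p = snd q \<or> snd p = fst q \<or> snd p = snd q"
  shows "p = q"
proof -
  have "fst p \<in> A" "snd p \<in> A" using mo_arcp[OF assms(1,2)] by auto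
  then have u: "\<exists>!r. r \<in> M \<and> (fst r = fst p \<or> snd r = fst p)" "\<exists>!r. r \<in> M \<and> (fst r = snd p \<or> snd r = snd p)"
    using assms(1) unfolding mo_def by blast+
  show ?thesis using assms(4)
  proof (elim disjE)
    assume "fst p = fst q" then show ?thesis using u(1) assms(2,3) by metis
  next
    assume "fst p = snd q" then show ?thesis using u(1) assms(2,3) by metis
  next
    assume "snd p = fst q" then show ?thesis using u(2) assms(2,3) by metis
  next
    assume "snd p = snd q" then show ?thesis using u(2) assms(2,3) by metis
  qed
qed

lemma moI:
  assumes "\<And>p. p \<in> M \<Longrightarrow> fst p < snd p \<and> fst p \<in> A \<and> snd p \<in> A"
    "\<And>x. x \<in> A \<Longrightarrow> \<exists>p\<in>M. fst p = x \<or> snd p = x"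
    "\<And>p q. p \<in> M \<Longrightarrow> q \<in> M \<Longrightarrow> fst p = fst q \<or> fst p = snd q \<or> snd p = fst q \<or> snd p = snd q \<Longrightarrow> p = q"
  shows "mo A M"
  unfolding mo_def
proof (rule conjI)
  show "\<forall>p\<in>M. fst p < snd p \<and> fst p \<in> A \<and> snd p \<in> A" using assms(1) by blast
  show "\<forall>x\<in>A. \<exists>!p. p \<in> M \<and> (fst p = x \<or> snd p = x)"
  proof
    fix x assume "x \<in> A"
    then obtain p where p: "p \<in> M" "fst p = x \<or> snd p = x" using assms(2) by blast
    show "\<exists>!p. p \<in> M \<and> (fst p = x \<or> snd p = x)"
    proof (rule ex1I[of _ p])
      show "p \<in> M \<and> (fst p = x \<or> snd p = x)" using p by blast
      fix q assume "q \<in> M \<and> (fst q = x \<or> snd q = x)"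
      then show "q = p" using assms(3)[of q p] p by auto
    qed
  qed
qed

lemma mo_F1: "mo A M \<Longrightarrow> (a, b) \<in> M \<Longrightarrow> (a, c) \<in> M \<Longrightarrow> b = c"
  using mo_unique[of A M "(a,b)" "(a,c)"] by auto
lemma mo_F2: "mo A M \<Longrightarrow> (a, b) \<in> M \<Longrightarrow> (c, b) \<in> M \<Longrightarrow> a = c"
  using mo_unique[of A M "(a,b)" "(c,b)"] by auto
lemma mo_F3: "mo A M \<Longrightarrow> (a, b) \<in> M \<Longrightarrow> (b, c) \<in> M \<Longrightarrow> False"
  using mo_unique[of A M "(a,b)" "(b,c)"] mo_arc[of A M a b] by auto

lemma mo_union: assumes "mo A M1" "mo B M2" "A \<inter> B = {}"
  shows "mo (A \<union> B) (M1 \<union> M2)"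
proof (rule moI)
  fix p assume "p \<in> M1 \<union> M2"
  then show "fst p < snd p \<and> fst p \<in> A \<union> B \<and> snd p \<in> A \<union> B"
    using mo_arcp[OF assms(1)] mo_arcp[OF assms(2)] by blast
next
  fix x assume "x \<in> A \<union> B"
  then show "\<exists>p\<in>M1 \<union> M2. fst p = x \<or> snd p = x"
    using mo_cover[OF assms(1)] mo_cover[OF assms(2)] by blast
next
  fix p q assume pq: "p \<in> M1 \<union> M2" "q \<in> M1 \<union> M2"
    "fst p = fst q \<or> fst p = snd q \<or> snd p = fst q \<or> snd p = snd q"
  have "\<not> (p \<in> M1 \<and> q \<in> M2)"
  proof
    assume "p \<in> M1 \<and> q \<in> M2"
    then have "fst p \<in> A" "snd p \<in> A" "fst q \<in> B" "snd q \<in> B"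
      using mo_arcp[OF assms(1)] mo_arcp[OF assms(2)] by blast+
    then show False using pq(3) assms(3) by auto
  qed
  moreover have "\<not> (p \<in> M2 \<and> q \<in> M1)"
  proof
    assume "p \<in> M2 \<and> q \<in> M1"
    then have "fst p \<in> B" "snd p \<in> B" "fst q \<in> A" "snd q \<in> A"
      using mo_arcp[OF assms(1)] mo_arcp[OF assms(2)] by blast+
    then show False using pq(3) assms(3) by auto
  qed
  ultimately show "p = q" using pq mo_unique[OF assms(1), of p q] mo_unique[OF assms(2), of p q] by blast
qed

lemma mo_image: assumes "mo A M" "strict_mono_on A f"
  shows "mo (f ` A) (mapM f M)"
proof -
  have inj: "inj_on f A" using assms(2) by (rule strict_mono_on_imp_inj_on)
  show ?thesis
  proof (rule moI)
    fix p assume "p \<in> mapM f M"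
    then obtain a b where ab: "(a,b) \<in> M" "p = (f a, f b)" unfolding mapM_def by auto
    have "a < b" "a \<in> A" "b \<in> A" using mo_arc[OF assms(1) ab(1)] by auto
    then have "f a < f b" using assms(2) unfolding strict_mono_on_def by blast
    then show "fst p < snd p \<and> fst p \<in> f ` A \<and> snd p \<in> f ` A"
      using ab \<open>a \<in> A\<close> \<open>b \<in> A\<close> by auto
  next
    fix x assume "x \<in> f ` A"
    then obtain y where y: "y \<in> A" "x = f y" by auto
    then obtain p where p: "p \<in> M" "fst p = y \<or> snd p = y" using mo_cover[OF assms(1)] by blast
    obtain a b where pab: "p = (a,b)" by fastforce
    have "(f a, f b) \<in> mapM f M" using p(1) pab unfolding mapM_def by force
    moreover have "fst (f a, f b) = x \<or> snd (f a, f b) = x" using p(2) pab y by auto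
    ultimately show "\<exists>p\<in>mapM f M. fst p = x \<or> snd p = x" by blast
  next
    fix p q assume pq: "p \<in> mapM f M" "q \<in> mapM f M"
      "fst p = fst q \<or> fst p = snd q \<or> snd p = fst q \<or> snd p = snd q"
    obtain a b where ab: "(a,b) \<in> M" "p = (f a, f b)" using pq(1) unfolding mapM_def by auto
    obtain c d where cd: "(c,d) \<in> M" "q = (f c, f d)" using pq(2) unfolding mapM_def by auto
    have A: "a \<in> A" "b \<in> A" "c \<in> A" "d \<in> A" using mo_arc[OF assms(1) ab(1)] mo_arc[OF assms(1) cd(1)] by auto
    have "f a = f c \<or> f a = f d \<or> f b = f c \<or> f b = f d" using pq(3) ab cd by auto
    then have "a = c \<or> a = d \<or> b = c \<or> b = d" using inj_on_eq_iff[OF inj] A by metis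
    then have "(a,b) = (c,d)" using mo_unique[OF assms(1) ab(1) cd(1)] by auto
    then show "p = q" using ab cd by auto
  qed
qed

lemma mo_diff: assumes "mo A M" "K \<subseteq> M"
  shows "mo (A - pts K) (M - K)"
proof (rule moI)
  fix p assume p: "p \<in> M - K"
  have "fst p \<notin> pts K"
  proof
    assume "fst p \<in> pts K"
    then obtain k where "k \<in> K" "fst k = fst p \<or> snd k = fst p" unfolding pts_def by auto
    then have "k = p" using mo_unique[OF assms(1), of k p] p assms(2) by auto
    then show False using p \<open>k \<in> K\<close> by auto
  qed
  moreover have "snd p \<notin> pts K"
  proof
    assume "snd p \<in> pts K"
    then obtain k where "k \<in> K" "fst k = snd p \<or> snd k = snd p" unfolding pts_def by auto
    then have "k = p" using mo_unique[OF assms(1), of k p] p assms(2) by auto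
    then show False using p \<open>k \<in> K\<close> by auto
  qed
  ultimately show "fst p < snd p \<and> fst p \<in> A - pts K \<and> snd p \<in> A - pts K"
    using p mo_arcp[OF assms(1)] by blast
next
  fix x assume x: "x \<in> A - pts K"
  then obtain p where p: "p \<in> M" "fst p = x \<or> snd p = x" using mo_cover[OF assms(1)] by blast
  have "p \<notin> K" using p x unfolding pts_def by auto
  then show "\<exists>p\<in>M - K. fst p = x \<or> snd p = x" using p by blast
next
  fix p q assume "p \<in> M - K" "q \<in> M - K" "fst p = fst q \<or> fst p = snd q \<or> snd p = fst q \<or> snd p = snd q"
  then show "p = q" using mo_unique[OF assms(1)] by blast
qed

lemma mo_finite: "mo A M \<Longrightarrow> finite A \<Longrightarrow> finite M"
proof -
  assume a: "mo A M" "finite A"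
  have "M \<subseteq> A \<times> A"
  proof
    fix p assume "p \<in> M"
    then have "fst p \<in> A" "snd p \<in> A" using mo_arcp[OF a(1)] by blast+
    then show "p \<in> A \<times> A" by (cases p) auto
  qed
  then show "finite M" using a(2) finite_subset by blast
qed

lemma mo_card: assumes "mo A M" "finite A" shows "card A = 2 * card M"
proof -
  have fin: "finite M" using mo_finite assms by blast
  have A: "A = fst ` M \<union> snd ` M"
  proof
    show "A \<subseteq> fst ` M \<union> snd ` M"
    proof
      fix x assume "x \<in> A"
      then obtain p where "p \<in> M" "fst p = x \<or> snd p = x" using mo_cover[OF assms(1)] by blast
      then show "x \<in> fst ` M \<union> snd ` M" by blast
    qed
    show "fst ` M \<union> snd ` M \<subseteq> A" using mo_arcp[OF assms(1)] by blast
  qed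
  have disj: "fst ` M \<inter> snd ` M = {}"
  proof (rule ccontr)
    assume "fst ` M \<inter> snd ` M \<noteq> {}"
    then obtain p q where pq: "p \<in> M" "q \<in> M" "fst p = snd q" by force
    then have "p = q" using mo_unique[OF assms(1) pq(1,2)] by blast
    moreover have "fst p < snd p" using pq(1) mo_arcp[OF assms(1)] by blast
    ultimately show False using pq(3) by simp
  qed
  have i1: "inj_on fst M"
  proof (rule inj_onI)
    fix p q assume "p \<in> M" "q \<in> M" "fst p = fst q"
    then show "p = q" using mo_unique[OF assms(1), of p q] by blast
  qed
  have i2: "inj_on snd M"
  proof (rule inj_onI)
    fix p q assume "p \<in> M" "q \<in> M" "snd p = snd q"
    then show "p = q" using mo_unique[OF assms(1), of p q] by blast
  qed
  have "card A = card (fst ` M) + card (snd ` M)"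
    using A disj fin by (simp add: card_Un_disjoint)
  also have "\<dots> = 2 * card M" using card_image[OF i1] card_image[OF i2] by simp
  finally show ?thesis .
qed

lemma mapM_mapM: assumes "\<And>x. x \<in> pts M \<Longrightarrow> g (f x) = x"
  shows "mapM g (mapM f M) = M"
proof -
  have "mapM g (mapM f M) = (\<lambda>(a,b). (g (f a), g (f b))) ` M"
    unfolding mapM_def image_image by (simp add: case_prod_beta)
  also have "\<dots> = (\<lambda>p. p) ` M"
  proof (rule image_cong)
    fix p assume p: "p \<in> M"
    obtain a b where ab: "p = (a,b)" by fastforce
    have "a \<in> pts M" "b \<in> pts M" using p ab unfolding pts_def by force+
    then show "(\<lambda>(a,b). (g (f a), g (f b))) p = p" using ab assms by simp
  qed simp
  finally show ?thesis by simp
qed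

lemma mem_mapM: "(a,b) \<in> M \<Longrightarrow> (f a, f b) \<in> mapM f M"
  unfolding mapM_def by force


lemma finite_matchings: "finite (matchings n)"
proof -
  have "matchings n \<subseteq> Pow ({1..2*n} \<times> {1..2*n})"
  proof
    fix M assume "M \<in> matchings n"
    then have m: "mo {1..2*n} M" unfolding matchings_def using is_matching_mo by blast
    show "M \<in> Pow ({1..2*n} \<times> {1..2*n})"
    proof (rule PowI, rule subsetI)
      fix p assume "p \<in> M" then show "p \<in> {1..2*n} \<times> {1..2*n}" using mo_arcp[OF m] by (cases p) auto
    qed
  qed
  then show ?thesis by (rule finite_subset) auto
qed

lemma matchings_mo: "M \<in> matchings n \<longleftrightarrow> mo {1..2*n} M"
  unfolding matchings_def using is_matching_mo by blast

definition c1 :: "nat \<Rightarrow> nat \<Rightarrow> nat" where "c1 b x = (if x < b then x - 1 else x - 2)"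
definition e1 :: "nat \<Rightarrow> nat \<Rightarrow> nat" where "e1 b y = (if y + 2 \<le> b then y + 1 else y + 2)"

lemma c1e1: "c1 b (e1 b y) = y" unfolding c1_def e1_def by auto
lemma e1c1: "x \<ge> 2 \<Longrightarrow> x \<noteq> b \<Longrightarrow> e1 b (c1 b x) = x" unfolding c1_def e1_def by auto
lemma e1_mono: "strict_mono (e1 b)" unfolding strict_mono_def e1_def by auto
lemma c1_mono: "strict_mono_on {x. 2 \<le> x \<and> x \<noteq> b} (c1 b)"
  unfolding strict_mono_on_def c1_def by auto

lemma e1_img: assumes "2 \<le> b" "b \<le> 2*N+2" shows "e1 b ` {1..2*N} = {1..2*N+2} - {1,b}"
proof
  show "e1 b ` {1..2*N} \<subseteq> {1..2*N+2} - {1,b}" using assms unfolding e1_def by auto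
  show "{1..2*N+2} - {1,b} \<subseteq> e1 b ` {1..2*N}"
  proof
    fix x assume x: "x \<in> {1..2*N+2} - {1,b}"
    then have "x = e1 b (c1 b x)" using e1c1[of x b] by auto
    moreover have "c1 b x \<in> {1..2*N}" using x assms unfolding c1_def by auto
    ultimately show "x \<in> e1 b ` {1..2*N}" by blast
  qed
qed

lemma c1_img: assumes "2 \<le> b" "b \<le> 2*N+2" shows "c1 b ` ({1..2*N+2} - {1,b}) = {1..2*N}"
proof -
  have "c1 b ` ({1..2*N+2} - {1,b}) = c1 b ` e1 b ` {1..2*N}" using e1_img[OF assms] by simp
  also have "\<dots> = {1..2*N}" unfolding image_image c1e1 by simp
  finally show ?thesis .
qed

lemma pts_single: "pts {(a,b)} = {a,b}" unfolding pts_def by auto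

definition Fb :: "nat \<Rightarrow> nat \<Rightarrow> (nat \<times> nat) set set" where
  "Fb N b = {M \<in> matchings (Suc N). (1,b) \<in> M}"

lemma fiber_card: assumes b: "2 \<le> b" "b \<le> 2*N+2"
  shows "card (Fb N b) = card (matchings N)"
proof -
  have S: "{1..2 * Suc N} = {1..2*N+2}" by simp
  let ?f = "\<lambda>M. mapM (c1 b) (M - {(1,b)})"
  let ?g = "\<lambda>M'. insert (1,b) (mapM (e1 b) M')"
  have "bij_betw ?f (Fb N b) (matchings N)"
  proof (rule bij_betw_byWitness[where f'="?g"])
    show "\<forall>M\<in>Fb N b. ?g (?f M) = M"
    proof
      fix M assume M: "M \<in> Fb N b"
      then have m: "mo {1..2*N+2} M" "(1,b) \<in> M" unfolding Fb_def matchings_mo S by auto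
      have md: "mo ({1..2*N+2} - {1,b}) (M - {(1,b)})" using mo_diff[OF m(1), of "{(1,b)}"] m(2) pts_single by simp
      have "mapM (e1 b) (mapM (c1 b) (M - {(1,b)})) = M - {(1,b)}"
      proof (rule mapM_mapM)
        fix x assume "x \<in> pts (M - {(1, b)})"
        then have "x \<in> {1..2*N+2} - {1,b}" using mo_arcp[OF md] unfolding pts_def by auto
        then show "e1 b (c1 b x) = x" using e1c1 by auto
      qed
      then show "?g (?f M) = M" using m(2) by auto
    qed
  next
    show "\<forall>M'\<in>matchings N. ?f (?g M') = M'"
    proof
      fix M' assume "M' \<in> matchings N"
      then have m: "mo {1..2*N} M'" unfolding matchings_mo by simp
      have "(1,b) \<notin> mapM (e1 b) M'"
      proof
        assume "(1,b) \<in> mapM (e1 b) M'"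
        then obtain y z where "(y,z) \<in> M'" "e1 b y = 1" unfolding mapM_def by auto
        then show False using mo_arc[OF m] unfolding e1_def by (auto split: if_splits)
      qed
      then have "?g M' - {(1,b)} = mapM (e1 b) M'" by auto
      then show "?f (?g M') = M'" by (simp add: mapM_mapM c1e1)
    qed
  next
    show "?f ` Fb N b \<subseteq> matchings N"
    proof
      fix M' assume "M' \<in> ?f ` Fb N b"
      then obtain M where M: "M \<in> Fb N b" "M' = ?f M" by blast
      then have m: "mo {1..2*N+2} M" "(1,b) \<in> M" unfolding Fb_def matchings_mo S by auto
      have md: "mo ({1..2*N+2} - {1,b}) (M - {(1,b)})" using mo_diff[OF m(1), of "{(1,b)}"] m(2) pts_single by simp
      have sm: "strict_mono_on ({1..2*N+2} - {1,b}) (c1 b)"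
        using c1_mono[of b] unfolding strict_mono_on_def by auto
      have "mo {1..2*N} M'" using mo_image[OF md sm] c1_img[OF b] M(2) by simp
      then show "M' \<in> matchings N" unfolding matchings_mo .
    qed
  next
    show "?g ` matchings N \<subseteq> Fb N b"
    proof
      fix M assume "M \<in> ?g ` matchings N"
      then obtain M' where M': "M' \<in> matchings N" "M = ?g M'" by blast
      then have m: "mo {1..2*N} M'" unfolding matchings_mo by simp
      have sm: "strict_mono_on {1..2*N} (e1 b)"
        using e1_mono[of b] unfolding strict_mono_on_def strict_mono_def by auto
      have m1: "mo ({1..2*N+2} - {1,b}) (mapM (e1 b) M')" using mo_image[OF m sm] e1_img[OF b] by simp
      have m2: "mo {1,b} {(1,b)}"
        by (rule moI) (use b in auto)
      have "mo (({1..2*N+2} - {1,b}) \<union> {1,b}) (mapM (e1 b) M' \<union> {(1,b)})"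
        by (rule mo_union[OF m1 m2]) auto
      moreover have "({1..2*N+2} - {1,b}) \<union> {1,b} = {1..2*N+2}" using b by auto
      ultimately have "mo {1..2*N+2} M" using M'(2) by simp
      then show "M \<in> Fb N b" unfolding Fb_def matchings_mo S using M'(2) by simp
    qed
  qed
  then show ?thesis by (rule bij_betw_same_card)
qed

lemma matchings_Suc: "card (matchings (Suc N)) = (2*N+1) * card (matchings N)"
proof -
  have U: "matchings (Suc N) = (\<Union>b\<in>{2..2*N+2}. Fb N b)"
  proof
    show "matchings (Suc N) \<subseteq> (\<Union>b\<in>{2..2*N+2}. Fb N b)"
    proof
      fix M assume M: "M \<in> matchings (Suc N)"
      then have m: "mo {1..2*N+2} M" unfolding matchings_mo by simp
      obtain p where p: "p \<in> M" "fst p = 1 \<or> snd p = 1" using mo_cover[OF m, of 1] by auto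
      have "fst p < snd p" "fst p \<in> {1..2*N+2}" "snd p \<in> {1..2*N+2}" using mo_arcp[OF m p(1)] by auto
      then have "fst p = 1" "snd p \<in> {2..2*N+2}" using p(2) by auto
      then have "(1, snd p) \<in> M" using p(1) by (metis prod.collapse)
      then show "M \<in> (\<Union>b\<in>{2..2*N+2}. Fb N b)" using M \<open>snd p \<in> {2..2*N+2}\<close> unfolding Fb_def by blast
    qed
    show "(\<Union>b\<in>{2..2*N+2}. Fb N b) \<subseteq> matchings (Suc N)" unfolding Fb_def by auto
  qed
  have "card (\<Union>b\<in>{2..2*N+2}. Fb N b) = (\<Sum>b\<in>{2..2*N+2}. card (Fb N b))"
  proof (rule card_UN_disjoint)
    show "\<forall>i\<in>{2..2*N+2}. finite (Fb N i)" unfolding Fb_def using finite_matchings by auto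
    show "\<forall>i\<in>{2..2*N+2}. \<forall>j\<in>{2..2*N+2}. i \<noteq> j \<longrightarrow> Fb N i \<inter> Fb N j = {}"
    proof (intro ballI impI)
      fix i j :: nat assume "i \<noteq> j"
      show "Fb N i \<inter> Fb N j = {}"
      proof (rule ccontr)
        assume "Fb N i \<inter> Fb N j \<noteq> {}"
        then obtain M where "M \<in> matchings (Suc N)" "(1,i) \<in> M" "(1,j) \<in> M" unfolding Fb_def by auto
        then show False using mo_F1[of _ M 1 i j] \<open>i \<noteq> j\<close> unfolding matchings_mo by blast
      qed
    qed
  qed simp
  also have "\<dots> = (\<Sum>b\<in>{2..2*N+2}. card (matchings N))" by (rule sum.cong) (auto simp: fiber_card)
  also have "\<dots> = (2*N+1) * card (matchings N)" by simp
  finally show ?thesis using U by simp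
qed

lemma matchings_0: "matchings 0 = {{}}"
proof
  show "matchings 0 \<subseteq> {{}}"
  proof
    fix M assume "M \<in> matchings 0"
    then have m: "mo {1..0} M" unfolding matchings_mo by simp
    have "M = {}"
    proof (rule ccontr)
      assume "M \<noteq> {}" then obtain p where "p \<in> M" by auto
      then show False using mo_arcp[OF m] by fastforce
    qed
    then show "M \<in> {{}}" by simp
  qed
  have "mo {1..0} {}" by (rule moI) auto
  then have "{} \<in> matchings 0" unfolding matchings_mo by simp
  then show "{{}} \<subseteq> matchings 0" by simp
qed

lemma card_matchings: "card (matchings n) = odd_dfact n"
proof (induction n)
  case 0 then show ?case by (simp add: matchings_0 odd_dfact_def)
next
  case (Suc n)
  have "odd_dfact (Suc n) = (2 * Suc n - 1) * odd_dfact n"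
    unfolding odd_dfact_def by (simp add: prod.nat_ivl_Suc')
  then show ?case using Suc matchings_Suc by simp
qed


definition arcsOf :: "nat \<times> nat \<Rightarrow> (nat \<times> nat) set" where
  "arcsOf o' = (case o' of (i,j) \<Rightarrow> {(i+1,j+1),(i+2,j+3),(i+3,j+2)})"

definition ptsOf :: "nat \<times> nat \<Rightarrow> nat set" where
  "ptsOf o' = (case o' of (i,j) \<Rightarrow> {i+1,i+2,i+3,j+1,j+2,j+3})"

lemma pts_arcsOf: "pts (arcsOf o') = ptsOf o'"
  unfolding pts_def arcsOf_def ptsOf_def by (cases o') auto

lemma occ_iff: "o' \<in> occ132 M \<longleftrightarrow> fst o' + 3 \<le> snd o' \<and> arcsOf o' \<subseteq> M"
  unfolding occ132_def arcsOf_def by (cases o') auto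

lemma card_arcsOf: "card (arcsOf o') = 3"
  unfolding arcsOf_def by (cases o') auto

lemma finite_arcsOf: "finite (arcsOf o')"
  unfolding arcsOf_def by (cases o') auto

lemma occ_overlap: assumes m: "mo A M" and o: "(a,b) \<in> occ132 M" and s: "(c,d) \<in> occ132 M"
  and ov: "arcsOf (a,b) \<inter> arcsOf (c,d) \<noteq> {}"
  shows "(a,b) = (c,d)"
proof -
  have h: "(a+1,b+1) \<in> M" "(a+2,b+3) \<in> M" "(a+3,b+2) \<in> M" "(c+1,d+1) \<in> M" "(c+2,d+3) \<in> M" "(c+3,d+2) \<in> M"
    using o s unfolding occ132_def by auto
  have F1: "\<And>x x' y z. (x,y) \<in> M \<Longrightarrow> (x',z) \<in> M \<Longrightarrow> x = x' \<Longrightarrow> y = z" using mo_F1[OF m] by blast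
  have F2: "\<And>x x' y z. (y,x) \<in> M \<Longrightarrow> (z,x') \<in> M \<Longrightarrow> x = x' \<Longrightarrow> y = z" using mo_F2[OF m] by blast
  from ov consider
      "a+1 = c+1" "b+1 = d+1" | "a+1 = c+2" "b+1 = d+3" | "a+1 = c+3" "b+1 = d+2"
    | "a+2 = c+1" "b+3 = d+1" | "a+2 = c+2" "b+3 = d+3" | "a+2 = c+3" "b+3 = d+2"
    | "a+3 = c+1" "b+2 = d+1" | "a+3 = c+2" "b+2 = d+3" | "a+3 = c+3" "b+2 = d+2"
    unfolding arcsOf_def by auto
  then show ?thesis
  proof cases
    case 1 then show ?thesis by simp
  next
    case 2 then show ?thesis using F1[OF h(2) h(6)] by simp
  next
    case 3 then show ?thesis using F2[OF h(3) h(5)] by simp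
  next
    case 4 then show ?thesis using F1[OF h(5) h(3)] by simp
  next
    case 5 then show ?thesis by simp
  next
    case 6 then show ?thesis using F1[OF h(1) h(5)] by simp
  next
    case 7 then show ?thesis using F2[OF h(6) h(2)] by simp
  next
    case 8 then show ?thesis using F1[OF h(4) h(2)] by simp
  next
    case 9 then show ?thesis by simp
  qed
qed

lemma occ_disj: assumes m: "mo A M" and o: "o' \<in> occ132 M" and s: "s \<in> occ132 M" and ne: "o' \<noteq> s"
  shows "ptsOf o' \<inter> ptsOf s = {}"
proof (rule ccontr)
  assume "ptsOf o' \<inter> ptsOf s \<noteq> {}"
  then obtain x where x: "x \<in> pts (arcsOf o')" "x \<in> pts (arcsOf s)" unfolding pts_arcsOf by auto
  obtain r1 where r1: "r1 \<in> arcsOf o'" "fst r1 = x \<or> snd r1 = x" using x(1) unfolding pts_def by force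
  obtain r2 where r2: "r2 \<in> arcsOf s" "fst r2 = x \<or> snd r2 = x" using x(2) unfolding pts_def by force
  note r = r1(1) r2(1) r1(2) r2(2)
  have "r1 \<in> M" "r2 \<in> M" using r(1,2) o s unfolding occ_iff by auto
  then have "r1 = r2" using mo_unique[OF m] r(3,4) by metis
  then have "arcsOf o' \<inter> arcsOf s \<noteq> {}" using r(1,2) by auto
  then show False using occ_overlap[OF m, of "fst o'" "snd o'" "fst s" "snd s"] o s ne by auto
qed

lemma arcs_disj: assumes m: "mo A M" and o: "o' \<in> occ132 M" and s: "s \<in> occ132 M" and ne: "o' \<noteq> s"
  shows "arcsOf o' \<inter> arcsOf s = {}"
proof (rule ccontr)
  assume "arcsOf o' \<inter> arcsOf s \<noteq> {}"
  then obtain r where "r \<in> arcsOf o'" "r \<in> arcsOf s" by blast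
  then have "fst r \<in> pts (arcsOf o')" "fst r \<in> pts (arcsOf s)" unfolding pts_def by auto
  then show False using occ_disj[OF assms] unfolding pts_arcsOf by blast
qed

lemma pt_notin: assumes "mo A M" "X \<subseteq> M" "r \<in> M" "r \<notin> X"
  shows "fst r \<notin> pts X" "snd r \<notin> pts X"
proof -
  show "fst r \<notin> pts X"
  proof
    assume "fst r \<in> pts X"
    then obtain r' where "r' \<in> X" "fst r' = fst r \<or> snd r' = fst r" unfolding pts_def by force
    then have "r' = r" using mo_unique[OF assms(1), of r' r] assms(2,3) by blast
    then show False using \<open>r' \<in> X\<close> assms(4) by simp
  qed
  show "snd r \<notin> pts X"
  proof
    assume "snd r \<in> pts X"
    then obtain r' where "r' \<in> X" "fst r' = snd r \<or> snd r' = snd r" unfolding pts_def by force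
    then have "r' = r" using mo_unique[OF assms(1), of r' r] assms(2,3) by blast
    then show False using \<open>r' \<in> X\<close> assms(4) by simp
  qed
qed

definition AS :: "nat \<Rightarrow> nat \<Rightarrow> ((nat \<times> nat) set \<times> (nat \<times> nat) set) set" where
  "AS n m = {(M,S). M \<in> matchings n \<and> S \<subseteq> occ132 M \<and> card S = m}"

lemma card_M: "M \<in> matchings n \<Longrightarrow> card M = n"
  using mo_card[of "{1..2*n}" M] unfolding matchings_mo by simp

lemma finite_M: "M \<in> matchings n \<Longrightarrow> finite M"
  using mo_finite[of "{1..2*n}" M] unfolding matchings_mo by simp

lemma occ_inj: "inj_on (\<lambda>(i,j). (i+1, j+1)) (occ132 M)"
  unfolding inj_on_def by auto

lemma occ_sub: "(\<lambda>(i,j). (i+1, j+1)) ` (occ132 M) \<subseteq> M"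
  unfolding occ132_def by auto

lemma finite_occ: "M \<in> matchings n \<Longrightarrow> finite (occ132 M)"
  using finite_imageD[OF finite_subset[OF occ_sub finite_M] occ_inj] by blast

lemma AS_Sigma: "AS n m = Sigma (matchings n) (\<lambda>M. {S. S \<subseteq> occ132 M \<and> card S = m})"
  unfolding AS_def by auto

lemma finite_AS: "finite (AS n m)"
  unfolding AS_Sigma using finite_matchings finite_occ by (intro finite_SigmaI) auto

lemma card_AS: "card (AS n m) = (\<Sum>M\<in>matchings n. num_occ132 M choose m)"
proof -
  have "card (AS n m) = (\<Sum>M\<in>matchings n. card {S. S \<subseteq> occ132 M \<and> card S = m})"
    unfolding AS_Sigma by (rule card_SigmaI) (use finite_matchings finite_occ in auto)
  also have "\<dots> = (\<Sum>M\<in>matchings n. num_occ132 M choose m)"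
    unfolding num_occ132_def by (rule sum.cong) (auto simp: n_subsets finite_occ)
  finally show ?thesis .
qed

definition TT :: "nat \<Rightarrow> nat \<Rightarrow> (((nat \<times> nat) set \<times> (nat \<times> nat) set) \<times> (nat \<times> nat)) set" where
  "TT n m = Sigma (AS (n+2) (Suc m)) snd"

definition UU :: "nat \<Rightarrow> nat \<Rightarrow> (((nat \<times> nat) set \<times> (nat \<times> nat) set) \<times> (nat \<times> nat)) set" where
  "UU n m = Sigma (AS n m) (\<lambda>(M,S). M - \<Union>(arcsOf ` S))"

lemma card_TT: "card (TT n m) = Suc m * card (AS (n+2) (Suc m))"
proof -
  have "card (TT n m) = (\<Sum>x\<in>AS (n+2) (Suc m). card (snd x))"
  proof -
    have "\<forall>x\<in>AS (n+2) (Suc m). finite (snd x)" by (auto simp: AS_def intro: card_ge_0_finite)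
    then show ?thesis unfolding TT_def using card_SigmaI[OF finite_AS] by blast
  qed
  also have "\<dots> = (\<Sum>x\<in>AS (n+2) (Suc m). Suc m)"
    by (rule sum.cong) (auto simp: AS_def)
  finally show ?thesis by simp
qed

lemma card_arcs_union: assumes "M \<in> matchings n" "S \<subseteq> occ132 M"
  shows "card (\<Union>(arcsOf ` S)) = 3 * card S"
proof -
  have m: "mo {1..2*n} M" using assms(1) matchings_mo by blast
  have fS: "finite S" using finite_subset[OF assms(2) finite_occ[OF assms(1)]] .
  have "\<forall>i\<in>S. \<forall>j\<in>S. i \<noteq> j \<longrightarrow> arcsOf i \<inter> arcsOf j = {}"
    using arcs_disj[OF m] assms(2) by blast
  then have "card (\<Union>(arcsOf ` S)) = (\<Sum>o'\<in>S. card (arcsOf o'))"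
    using card_UN_disjoint[OF fS] finite_arcsOf by blast
  then show ?thesis by (simp add: card_arcsOf)
qed

lemma card_UU: "card (UU n m) = (n - 3*m) * card (AS n m)"
proof -
  have "card (UU n m) = (\<Sum>x\<in>AS n m. card ((\<lambda>(M,S). M - \<Union>(arcsOf ` S)) x))"
  proof -
    have "\<forall>x\<in>AS n m. finite ((\<lambda>(M,S). M - \<Union>(arcsOf ` S)) x)" by (auto simp: AS_def dest: finite_M)
    then show ?thesis unfolding UU_def using card_SigmaI[OF finite_AS] by blast
  qed
  also have "\<dots> = (\<Sum>x\<in>AS n m. n - 3*m)"
  proof (rule sum.cong)
    fix x assume "x \<in> AS n m"
    then obtain M S where x: "x = (M,S)" "M \<in> matchings n" "S \<subseteq> occ132 M" "card S = m" unfolding AS_def by auto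
    have sub: "\<Union>(arcsOf ` S) \<subseteq> M"
    proof
      fix r assume "r \<in> \<Union>(arcsOf ` S)"
      then obtain o' where "o' \<in> S" "r \<in> arcsOf o'" by blast
      then show "r \<in> M" using x(3) occ_iff by blast
    qed
    have "card (M - \<Union>(arcsOf ` S)) = card M - card (\<Union>(arcsOf ` S))"
      using card_Diff_subset[OF finite_subset[OF sub finite_M[OF x(2)]] sub] .
    then show "card ((\<lambda>(M,S). M - \<Union>(arcsOf ` S)) x) = n - 3*m"
      using card_M[OF x(2)] card_arcs_union[OF x(2,3)] x(1,4) by simp
  qed simp
  finally show ?thesis by simp
qed


definition cc :: "nat \<Rightarrow> nat \<Rightarrow> nat \<Rightarrow> nat" where
  "cc i j x = (if x \<le> i+1 then x else if x \<le> j+1 then x-2 else x-4)"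
definition ee :: "nat \<Rightarrow> nat \<Rightarrow> nat \<Rightarrow> nat" where
  "ee i j y = (if y \<le> i+1 then y else if y+1 \<le> j then y+2 else y+4)"
definition DD :: "nat \<Rightarrow> nat \<Rightarrow> nat set" where
  "DD i j = {i+2, i+3, j+2, j+3}"
definition KK :: "nat \<Rightarrow> nat \<Rightarrow> (nat \<times> nat) set" where
  "KK i j = {(i+2, j+3), (i+3, j+2)}"

lemma pts_KK: "pts (KK i j) = DD i j" unfolding pts_def KK_def DD_def by auto

context fixes i j :: nat assumes ij: "i + 3 \<le> j"
begin

lemma E1: "x \<notin> DD i j \<Longrightarrow> ee i j (cc i j x) = x"
  using ij unfolding ee_def cc_def DD_def by auto
lemma E2: "cc i j (ee i j y) = y"
  using ij unfolding ee_def cc_def by auto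
lemma E3: "ee i j y \<notin> DD i j"
  using ij unfolding ee_def DD_def by auto
lemma E4a: "strict_mono (ee i j)"
  using ij unfolding ee_def strict_mono_def by auto
lemma E4b: "strict_mono_on (- DD i j) (cc i j)"
  using ij unfolding cc_def strict_mono_on_def DD_def by auto
lemma E5a: "ee i j y \<ge> y"
  unfolding ee_def by auto
lemma E5b: "x \<ge> 1 \<Longrightarrow> x \<notin> DD i j \<Longrightarrow> cc i j x \<ge> 1"
  using ij unfolding cc_def DD_def by auto
lemma E7a: "y \<noteq> i+1 \<Longrightarrow> y + 1 \<noteq> j \<Longrightarrow> ee i j (y+1) = ee i j y + 1"
  using ij unfolding ee_def by auto
lemma E7b: "x \<notin> DD i j \<Longrightarrow> x + 1 \<notin> DD i j \<Longrightarrow> cc i j (x+1) = cc i j x + 1"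
  using ij unfolding cc_def DD_def by auto

lemma E6a: assumes "j \<le> 2*n+1" shows "ee i j ` {1..2*n} = {1..2*n+4} - DD i j"
proof
  show "ee i j ` {1..2*n} \<subseteq> {1..2*n+4} - DD i j"
  proof
    fix x assume "x \<in> ee i j ` {1..2*n}"
    then obtain y where y: "y \<in> {1..2*n}" "x = ee i j y" by blast
    then show "x \<in> {1..2*n+4} - DD i j" using E3[of y] E5a[of y] unfolding ee_def by auto
  qed
  show "{1..2*n+4} - DD i j \<subseteq> ee i j ` {1..2*n}"
  proof
    fix x assume x: "x \<in> {1..2*n+4} - DD i j"
    then have "x = ee i j (cc i j x)" using E1 by auto
    moreover have "cc i j x \<in> {1..2*n}" using x assms ij E5b[of x] unfolding cc_def by auto
    ultimately show "x \<in> ee i j ` {1..2*n}" by blast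
  qed
qed

lemma E6b: assumes "j \<le> 2*n+1" shows "cc i j ` ({1..2*n+4} - DD i j) = {1..2*n}"
proof -
  have "cc i j ` ({1..2*n+4} - DD i j) = cc i j ` ee i j ` {1..2*n}" using E6a[OF assms] by simp
  also have "\<dots> = {1..2*n}" unfolding image_image E2 by simp
  finally show ?thesis .
qed

end


definition shiftO :: "(nat \<Rightarrow> nat) \<Rightarrow> nat \<times> nat \<Rightarrow> nat \<times> nat" where
  "shiftO f o' = (f (fst o' + 1) - 1, f (snd o' + 1) - 1)"

lemma arcs_shift: assumes "f (a+2) = f (a+1) + 1" "f (a+3) = f (a+1) + 2"
  "f (b+2) = f (b+1) + 1" "f (b+3) = f (b+1) + 2" "f (a+1) \<ge> 1" "f (b+1) \<ge> 1"
  shows "arcsOf (shiftO f (a,b)) = mapM f (arcsOf (a,b))"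
proof -
  have e: "f (a+1) - 1 + 1 = f (a+1)" "f (b+1) - 1 + 1 = f (b+1)" using assms(5,6) by auto
  have "arcsOf (shiftO f (a,b)) = {(f (a+1), f (b+1)), (f (a+1) + 1, f (b+1) + 2), (f (a+1) + 2, f (b+1) + 1)}"
    unfolding arcsOf_def shiftO_def using assms(5,6) by auto
  also have "\<dots> = mapM f (arcsOf (a,b))"
    unfolding mapM_def arcsOf_def using assms(1-4) by simp
  finally show ?thesis .
qed

lemma shiftO_fst_le: assumes "f (a+1) \<ge> 1" "f (b+1) > f (a+1) + 2"
  shows "fst (shiftO f (a,b)) + 3 \<le> snd (shiftO f (a,b))"
  using assms unfolding shiftO_def by auto

lemma shiftO_shiftO: assumes "f (a+1) \<ge> 1" "f (b+1) \<ge> 1" "g (f (a+1)) = a+1" "g (f (b+1)) = b+1"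
  shows "shiftO g (shiftO f (a,b)) = (a,b)"
  using assms unfolding shiftO_def by simp

definition expd where
  "expd x = (case x of ((M',S'),(p,q)) \<Rightarrow>
     ((mapM (ee (p-1) (q+1)) M' \<union> KK (p-1) (q+1), insert (p-1,q+1) (shiftO (ee (p-1) (q+1)) ` S')), (p-1,q+1)))"

definition contr where
  "contr x = (case x of ((M,S),(i,j)) \<Rightarrow>
     ((mapM (cc i j) (M - KK i j), shiftO (cc i j) ` (S - {(i,j)})), (i+1, j-1)))"

lemma expand_ok:
  assumes M': "M' \<in> matchings n" and S': "S' \<subseteq> occ132 M'" "card S' = m"
    and pq: "(p,q) \<in> M'" "(p,q) \<notin> \<Union>(arcsOf ` S')"
  shows "expd ((M',S'),(p,q)) \<in> TT n m \<and> contr (expd ((M',S'),(p,q))) = ((M',S'),(p,q))"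
proof -
  define i where "i = p - 1"
  define j where "j = q + 1"
  have m: "mo {1..2*n} M'" using M' matchings_mo by blast
  have pq1: "1 \<le> p" "p < q" "q \<le> 2*n" using mo_arc[OF m pq(1)] by auto
  have ij: "i + 3 \<le> j" "j \<le> 2*n+1" "i + 1 = p" "j - 1 = q" using pq1 unfolding i_def j_def by auto
  have fS: "finite S'" using finite_subset[OF S'(1) finite_occ[OF M']] .
  have avoid: "p \<notin> ptsOf o'" "q \<notin> ptsOf o'" if "o' \<in> S'" for o'
  proof -
    have "arcsOf o' \<subseteq> M'" using that S'(1) occ_iff by blast
    moreover have "(p,q) \<notin> arcsOf o'" using that pq(2) by blast
    then have "fst (p,q) \<notin> pts (arcsOf o')" "snd (p,q) \<notin> pts (arcsOf o')"
      using pt_notin[OF m calculation(1) pq(1)] by blast+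
    then show "p \<notin> ptsOf o'" "q \<notin> ptsOf o'" unfolding pts_arcsOf by simp_all
  qed
  let ?e = "ee i j"
  let ?M = "mapM ?e M' \<union> KK i j"
  let ?S = "insert (i,j) (shiftO ?e ` S')"
  have ex: "expd ((M',S'),(p,q)) = ((?M, ?S), (i,j))"
    unfolding expd_def i_def j_def by simp
  have sm: "strict_mono_on {1..2*n} ?e" using E4a[OF ij(1)] unfolding strict_mono_def strict_mono_on_def by blast
  have m1: "mo ({1..2*n+4} - DD i j) (mapM ?e M')" using mo_image[OF m sm] E6a[OF ij(1,2)] by simp
  have m2: "mo (DD i j) (KK i j)"
    by (rule moI) (use ij(1) in \<open>auto simp: KK_def DD_def\<close>)
  have "mo (({1..2*n+4} - DD i j) \<union> DD i j) ?M" by (rule mo_union[OF m1 m2]) auto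
  moreover have "({1..2*n+4} - DD i j) \<union> DD i j = {1..2*(n+2)}" using ij unfolding DD_def by auto
  ultimately have mM: "mo {1..2*(n+2)} ?M" by simp
  have shocc: "shiftO ?e o' \<in> occ132 ?M \<and> arcsOf (shiftO ?e o') = mapM ?e (arcsOf o')" if o: "o' \<in> S'" for o'
  proof -
    obtain a b where ab: "o' = (a,b)" by fastforce
    have "(a,b) \<in> occ132 M'" using o ab S'(1) by blast
    then have occ: "a + 3 \<le> b" "arcsOf (a,b) \<subseteq> M'" using occ_iff[of "(a,b)" M'] by simp_all
    have np: "a+1 \<noteq> p" "a+2 \<noteq> p" "b+1 \<noteq> p" "b+2 \<noteq> p" "a+1 \<noteq> q" "a+2 \<noteq> q" "b+1 \<noteq> q" "b+2 \<noteq> q"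
      using avoid[OF o] unfolding ab ptsOf_def by auto
    have c1: "?e (a+2) = ?e (a+1) + 1" using E7a[OF ij(1), of "a+1"] np ij by (simp add: eval_nat_numeral)
    have c2: "?e (a+3) = ?e (a+2) + 1" using E7a[OF ij(1), of "a+2"] np ij by (simp add: eval_nat_numeral)
    have c3: "?e (b+2) = ?e (b+1) + 1" using E7a[OF ij(1), of "b+1"] np ij by (simp add: eval_nat_numeral)
    have c4: "?e (b+3) = ?e (b+2) + 1" using E7a[OF ij(1), of "b+2"] np ij by (simp add: eval_nat_numeral)
    have g1: "?e (a+1) \<ge> 1" "?e (b+1) \<ge> 1" using E5a[OF ij(1), of "a+1"] E5a[OF ij(1), of "b+1"] by auto
    have A: "arcsOf (shiftO ?e (a,b)) = mapM ?e (arcsOf (a,b))"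
      by (rule arcs_shift) (use c1 c2 c3 c4 g1 in auto)
    have "?e (a+3) < ?e (b+1)" using strict_monoD[OF E4a[OF ij(1)], of "a+3" "b+1"] occ(1) by simp
    then have "fst (shiftO ?e (a,b)) + 3 \<le> snd (shiftO ?e (a,b))"
      by (intro shiftO_fst_le) (use c1 c2 g1 in auto)
    moreover have "mapM ?e (arcsOf (a,b)) \<subseteq> mapM ?e M'" unfolding mapM_def using occ(2) by (rule image_mono)
    then have "arcsOf (shiftO ?e (a,b)) \<subseteq> ?M" using A by blast
    ultimately have "shiftO ?e (a,b) \<in> occ132 ?M" using occ_iff[of "shiftO ?e (a,b)" ?M] by blast
    then show ?thesis using A ab by simp
  qed
  have ij_occ: "(i,j) \<in> occ132 ?M"
  proof -
    have "?e p = p" "?e q = q + 2" using ij unfolding ee_def by auto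
    then have "(i+1, j+1) \<in> mapM ?e M'" using mem_mapM[OF pq(1), of ?e] ij by auto
    then show ?thesis unfolding occ132_def KK_def using ij by auto
  qed
  have g0: "?e (x + 1) \<ge> 1" for x using E5a[OF ij(1), of "x+1"] by simp
  have g: "?e (fst o' + 1) \<ge> 1" "?e (snd o' + 1) \<ge> 1" for o' using g0 by blast+
  have notin: "(i,j) \<notin> shiftO ?e ` S'"
  proof (rule notI)
    assume "(i,j) \<in> shiftO ?e ` S'"
    then obtain o' where o: "o' \<in> S'" "(i,j) = shiftO ?e o'" by (rule imageE)
    then have "?e (fst o' + 1) - 1 = i" unfolding shiftO_def by (simp add: prod_eq_iff)
    then have "?e (fst o' + 1) = p" using g(1)[of o'] ij(3) by linarith
    moreover have "?e p = p" using ij(3) unfolding ee_def by auto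
    ultimately have "fst o' + 1 = p" using strict_mono_eq[OF E4a[OF ij(1)], of "fst o' + 1" p] by simp
    then show False using avoid(1)[OF o(1)] unfolding ptsOf_def by (cases o') auto
  qed
  have inj: "inj_on (shiftO ?e) S'"
  proof (rule inj_onI)
    fix x y assume "x \<in> S'" "y \<in> S'" "shiftO ?e x = shiftO ?e y"
    then have "?e (fst x + 1) - 1 = ?e (fst y + 1) - 1" "?e (snd x + 1) - 1 = ?e (snd y + 1) - 1"
      unfolding shiftO_def by (simp_all add: prod_eq_iff)
    then have "?e (fst x + 1) = ?e (fst y + 1)" "?e (snd x + 1) = ?e (snd y + 1)"
      using g[of x] g[of y] by linarith+
    then have "fst x = fst y" "snd x = snd y" using strict_mono_eq[OF E4a[OF ij(1)]] by auto
    then show "x = y" by (simp add: prod_eq_iff)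
  qed
  have cardS: "card ?S = Suc m" using notin card_image[OF inj] fS S'(2) by simp
  have subS: "?S \<subseteq> occ132 ?M" using shocc ij_occ by auto
  have inTT: "((?M, ?S), (i,j)) \<in> TT n m"
    unfolding TT_def AS_def using mM cardS subS by (auto simp: matchings_mo)
  have disjK: "mapM ?e M' \<inter> KK i j = {}"
  proof -
    have "fst r \<notin> DD i j" if "r \<in> mapM ?e M'" for r using that E3[OF ij(1)] unfolding mapM_def by auto
    moreover have "fst r \<in> DD i j" if "r \<in> KK i j" for r using that unfolding KK_def DD_def by auto
    ultimately show ?thesis by blast
  qed
  have r1: "mapM (cc i j) (?M - KK i j) = M'"
  proof -
    have "?M - KK i j = mapM ?e M'" using disjK by blast
    then show ?thesis using mapM_mapM[of M' "cc i j" ?e] E2[OF ij(1)] by simp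
  qed
  have r2: "shiftO (cc i j) ` (?S - {(i,j)}) = S'"
  proof -
    have "?S - {(i,j)} = shiftO ?e ` S'" using notin by blast
    moreover have "shiftO (cc i j) (shiftO ?e o') = o'" for o'
      using shiftO_shiftO[of ?e "fst o'" "snd o'" "cc i j"] g[of o'] E2[OF ij(1)] by simp
    ultimately show ?thesis by (simp add: image_image)
  qed
  have "contr ((?M, ?S), (i,j)) = ((M',S'),(p,q))"
    unfolding contr_def using r1 r2 ij by simp
  then show ?thesis using ex inTT by simp
qed


lemma contract_ok:
  assumes M: "M \<in> matchings (n+2)" and S: "S \<subseteq> occ132 M" "card S = Suc m" and s: "(i,j) \<in> S"
  shows "contr ((M,S),(i,j)) \<in> UU n m \<and> expd (contr ((M,S),(i,j))) = ((M,S),(i,j))"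
proof -
  have m0: "mo {1..2*(n+2)} M" using M matchings_mo by blast
  have e4: "2*(n+2) = 2*n+4" by simp
  have m: "mo {1..2*n+4} M" using m0 unfolding e4 .
  have socc: "(i,j) \<in> occ132 M" using s S(1) by blast
  then have ij0: "i + 3 \<le> j" "arcsOf (i,j) \<subseteq> M" using occ_iff[of "(i,j)" M] by simp_all
  have KM: "KK i j \<subseteq> M" using ij0(2) unfolding KK_def arcsOf_def by auto
  have "(i+2, j+3) \<in> M" using KM unfolding KK_def by auto
  then have "j + 3 \<le> 2*n+4" using mo_arc[OF m] by auto
  then have ij: "i + 3 \<le> j" "j \<le> 2*n+1" using ij0 by auto
  have fS: "finite S" using S(2) card_ge_0_finite by force
  let ?c = "cc i j"
  let ?M' = "mapM ?c (M - KK i j)"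
  let ?S' = "shiftO ?c ` (S - {(i,j)})"
  have cx: "contr ((M,S),(i,j)) = ((?M', ?S'), (i+1, j-1))" unfolding contr_def by simp
  have md: "mo ({1..2*n+4} - DD i j) (M - KK i j)" using mo_diff[OF m KM] pts_KK by simp
  have sm: "strict_mono_on ({1..2*n+4} - DD i j) ?c"
    using E4b[OF ij(1)] unfolding strict_mono_on_def by blast
  have mM': "mo {1..2*n} ?M'" using mo_image[OF md sm] E6b[OF ij] by simp
  have DDs: "DD i j \<subseteq> ptsOf (i,j)" unfolding DD_def ptsOf_def by auto
  have avoid: "ptsOf o' \<inter> DD i j = {}" if "o' \<in> S - {(i,j)}" for o'
    using occ_disj[OF m, of o' "(i,j)"] that S(1) socc DDs by blast
  have inj_c: "inj_on ?c (- DD i j)" using strict_mono_on_imp_inj_on[OF E4b[OF ij(1)]] .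
  have shocc: "shiftO ?c o' \<in> occ132 ?M' \<and> arcsOf (shiftO ?c o') = mapM ?c (arcsOf o')"
    if o: "o' \<in> S - {(i,j)}" for o'
  proof -
    obtain a b where ab: "o' = (a,b)" by fastforce
    have "(a,b) \<in> occ132 M" using o ab S(1) by blast
    then have occ: "a + 3 \<le> b" "arcsOf (a,b) \<subseteq> M" using occ_iff[of "(a,b)" M] by simp_all
    have nd: "a+1 \<notin> DD i j" "a+2 \<notin> DD i j" "a+3 \<notin> DD i j" "b+1 \<notin> DD i j" "b+2 \<notin> DD i j" "b+3 \<notin> DD i j"
      using avoid[OF o] unfolding ab ptsOf_def by auto
    have c1: "?c (a+2) = ?c (a+1) + 1" using E7b[OF ij(1), of "a+1"] nd by (simp add: eval_nat_numeral)
    have c2: "?c (a+3) = ?c (a+2) + 1" using E7b[OF ij(1), of "a+2"] nd by (simp add: eval_nat_numeral)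
    have c3: "?c (b+2) = ?c (b+1) + 1" using E7b[OF ij(1), of "b+1"] nd by (simp add: eval_nat_numeral)
    have c4: "?c (b+3) = ?c (b+2) + 1" using E7b[OF ij(1), of "b+2"] nd by (simp add: eval_nat_numeral)
    have g1: "?c (a+1) \<ge> 1" "?c (b+1) \<ge> 1" using E5b[OF ij(1), of "a+1"] E5b[OF ij(1), of "b+1"] nd by auto
    have A: "arcsOf (shiftO ?c (a,b)) = mapM ?c (arcsOf (a,b))"
      by (rule arcs_shift) (use c1 c2 c3 c4 g1 in auto)
    have "?c (a+3) < ?c (b+1)"
      using E4b[OF ij(1)] nd occ(1) unfolding strict_mono_on_def by auto
    then have "fst (shiftO ?c (a,b)) + 3 \<le> snd (shiftO ?c (a,b))"
      by (intro shiftO_fst_le) (use c1 c2 g1 in auto)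
    moreover have "arcsOf (a,b) \<subseteq> M - KK i j"
    proof -
      have "arcsOf (a,b) \<inter> arcsOf (i,j) = {}" using arcs_disj[OF m, of "(a,b)" "(i,j)"] o ab S(1) socc by blast
      moreover have "KK i j \<subseteq> arcsOf (i,j)" unfolding KK_def arcsOf_def by auto
      ultimately show ?thesis using occ(2) by blast
    qed
    then have "mapM ?c (arcsOf (a,b)) \<subseteq> ?M'" unfolding mapM_def by (rule image_mono)
    then have "arcsOf (shiftO ?c (a,b)) \<subseteq> ?M'" using A by blast
    ultimately have "shiftO ?c (a,b) \<in> occ132 ?M'" using occ_iff[of "shiftO ?c (a,b)" ?M'] by blast
    then show ?thesis using A ab by simp
  qed
  have g: "?c (fst o' + 1) \<ge> 1 \<and> ?c (snd o' + 1) \<ge> 1 \<and> fst o' + 1 \<notin> DD i j \<and> snd o' + 1 \<notin> DD i j"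
    if "o' \<in> S - {(i,j)}" for o'
  proof -
    have "fst o' + 1 \<notin> DD i j"
      using avoid[OF that] unfolding ptsOf_def by (cases o') auto
    moreover have "snd o' + 1 \<notin> DD i j"
      using avoid[OF that] unfolding ptsOf_def by (cases o') auto
    ultimately have "fst o' + 1 \<notin> DD i j" "snd o' + 1 \<notin> DD i j" by blast+
    then show ?thesis using E5b[OF ij(1)] by auto
  qed
  have inj: "inj_on (shiftO ?c) (S - {(i,j)})"
  proof (rule inj_onI)
    fix x y assume xy: "x \<in> S - {(i,j)}" "y \<in> S - {(i,j)}" "shiftO ?c x = shiftO ?c y"
    then have "?c (fst x + 1) - 1 = ?c (fst y + 1) - 1" "?c (snd x + 1) - 1 = ?c (snd y + 1) - 1"
      unfolding shiftO_def by (simp_all add: prod_eq_iff)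
    then have "?c (fst x + 1) = ?c (fst y + 1)" "?c (snd x + 1) = ?c (snd y + 1)"
      using g[OF xy(1)] g[OF xy(2)] by linarith+
    then have "fst x + 1 = fst y + 1" "snd x + 1 = snd y + 1"
      using inj_onD[OF inj_c] g[OF xy(1)] g[OF xy(2)] by auto
    then show "x = y" by (simp add: prod_eq_iff)
  qed
  have cardS': "card ?S' = m" using card_image[OF inj] S(2) fS s by simp
  have subS': "?S' \<subseteq> occ132 ?M'" using shocc by blast
  have pqM: "(i+1, j-1) \<in> ?M'"
  proof -
    have "(i+1, j+1) \<in> M - KK i j" using ij0(2) unfolding arcsOf_def KK_def by auto
    moreover have "?c (i+1) = i+1" "?c (j+1) = j-1" using ij unfolding cc_def by auto
    ultimately show ?thesis using mem_mapM[of "i+1" "j+1" "M - KK i j" ?c] by simp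
  qed
  have pqnot: "(i+1, j-1) \<notin> \<Union>(arcsOf ` ?S')"
  proof
    assume "(i+1, j-1) \<in> \<Union>(arcsOf ` ?S')"
    then obtain o' where o: "o' \<in> S - {(i,j)}" "(i+1, j-1) \<in> arcsOf (shiftO ?c o')" by blast
    then have "(i+1, j-1) \<in> mapM ?c (arcsOf o')" using shocc by blast
    then obtain x y where xy: "(x,y) \<in> arcsOf o'" "?c x = i+1" unfolding mapM_def by auto
    have xo: "x \<in> ptsOf o'" using xy(1) pts_arcsOf[of o'] unfolding pts_def by force
    then have "x \<notin> DD i j" using avoid[OF o(1)] by blast
    moreover have "i+1 \<notin> DD i j" "?c (i+1) = i+1" using ij unfolding DD_def cc_def by auto
    ultimately have "x = i+1" using inj_onD[OF inj_c, of x "i+1"] xy(2) by simp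
    moreover have "i+1 \<in> ptsOf (i,j)" unfolding ptsOf_def by simp
    ultimately show False using occ_disj[OF m, of o' "(i,j)"] o(1) S(1) socc xo by blast
  qed
  have inUU: "((?M', ?S'), (i+1, j-1)) \<in> UU n m"
    unfolding UU_def AS_def using mM' cardS' subS' pqM pqnot by (auto simp: matchings_mo)
  have ex: "expd ((?M', ?S'), (i+1, j-1)) = ((mapM (ee i j) ?M' \<union> KK i j, insert (i,j) (shiftO (ee i j) ` ?S')), (i,j))"
    unfolding expd_def using ij by simp
  have r1: "mapM (ee i j) ?M' \<union> KK i j = M"
  proof -
    have "mapM (ee i j) ?M' = M - KK i j"
    proof (rule mapM_mapM)
      fix x assume "x \<in> pts (M - KK i j)"
      then have "x \<notin> DD i j" using mo_arcp[OF md] unfolding pts_def by auto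
      then show "ee i j (?c x) = x" using E1[OF ij(1)] by simp
    qed
    then show ?thesis using KM by blast
  qed
  have r2: "insert (i,j) (shiftO (ee i j) ` ?S') = S"
  proof -
    have "shiftO (ee i j) (shiftO ?c o') = o'" if "o' \<in> S - {(i,j)}" for o'
      using shiftO_shiftO[of ?c "fst o'" "snd o'" "ee i j"] g[OF that] E1[OF ij(1)] by simp
    then have "shiftO (ee i j) ` ?S' = S - {(i,j)}" by (simp add: image_image)
    then show ?thesis using s by blast
  qed
  show ?thesis using cx inUU ex r1 r2 by simp
qed


lemma TT_E: assumes "a \<in> TT n m"
  obtains M S i j where "a = ((M,S),(i,j))" "M \<in> matchings (n+2)" "S \<subseteq> occ132 M" "card S = Suc m" "(i,j) \<in> S"
proof -
  obtain x s where xs: "a = (x,s)" "x \<in> AS (n+2) (Suc m)" "s \<in> snd x" using assms unfolding TT_def by blast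
  obtain M S where MS: "x = (M,S)" by fastforce
  obtain i j where ij: "s = (i,j)" by fastforce
  have "M \<in> matchings (n+2)" "S \<subseteq> occ132 M" "card S = Suc m" using xs(2) MS unfolding AS_def by simp_all
  moreover have "(i,j) \<in> S" using xs(3) MS ij by simp
  moreover have "a = ((M,S),(i,j))" using xs(1) MS ij by simp
  ultimately show ?thesis using that by blast
qed

lemma UU_E: assumes "a \<in> UU n m"
  obtains M S p q where "a = ((M,S),(p,q))" "M \<in> matchings n" "S \<subseteq> occ132 M" "card S = m" "(p,q) \<in> M" "(p,q) \<notin> \<Union>(arcsOf ` S)"
proof -
  obtain x s where xs: "a = (x,s)" "x \<in> AS n m" "s \<in> (\<lambda>(M,S). M - \<Union>(arcsOf ` S)) x" using assms unfolding UU_def by blast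
  obtain M S where MS: "x = (M,S)" by fastforce
  obtain p q where pq: "s = (p,q)" by fastforce
  have "M \<in> matchings n" "S \<subseteq> occ132 M" "card S = m" using xs(2) MS unfolding AS_def by simp_all
  moreover have "(p,q) \<in> M" "(p,q) \<notin> \<Union>(arcsOf ` S)" using xs(3) MS pq by simp_all
  moreover have "a = ((M,S),(p,q))" using xs(1) MS pq by simp
  ultimately show ?thesis using that by blast
qed

lemma bij_TU: "bij_betw contr (TT n m) (UU n m)"
proof (rule bij_betw_byWitness[where f' = expd])
  show "\<forall>a\<in>TT n m. expd (contr a) = a"
  proof
    fix a assume "a \<in> TT n m"
    then obtain M S i j where h: "a = ((M,S),(i,j))" "M \<in> matchings (n+2)" "S \<subseteq> occ132 M" "card S = Suc m" "(i,j) \<in> S"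
      by (rule TT_E)
    have "expd (contr ((M,S),(i,j))) = ((M,S),(i,j))" using contract_ok[OF h(2-5)] by (rule conjunct2)
    then show "expd (contr a) = a" using h(1) by simp
  qed
  show "\<forall>a\<in>UU n m. contr (expd a) = a"
  proof
    fix a assume "a \<in> UU n m"
    then obtain M S p q where h: "a = ((M,S),(p,q))" "M \<in> matchings n" "S \<subseteq> occ132 M" "card S = m" "(p,q) \<in> M" "(p,q) \<notin> \<Union>(arcsOf ` S)"
      by (rule UU_E)
    have "contr (expd ((M,S),(p,q))) = ((M,S),(p,q))" using expand_ok[OF h(2-6)] by (rule conjunct2)
    then show "contr (expd a) = a" using h(1) by simp
  qed
  show "contr ` TT n m \<subseteq> UU n m"
  proof
    fix b assume "b \<in> contr ` TT n m"
    then obtain a where a: "a \<in> TT n m" "b = contr a" by blast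
    from a(1) obtain M S i j where h: "a = ((M,S),(i,j))" "M \<in> matchings (n+2)" "S \<subseteq> occ132 M" "card S = Suc m" "(i,j) \<in> S"
      by (rule TT_E)
    have "contr ((M,S),(i,j)) \<in> UU n m" using contract_ok[OF h(2-5)] by (rule conjunct1)
    then show "b \<in> UU n m" using h(1) a(2) by simp
  qed
  show "expd ` UU n m \<subseteq> TT n m"
  proof
    fix b assume "b \<in> expd ` UU n m"
    then obtain a where a: "a \<in> UU n m" "b = expd a" by blast
    from a(1) obtain M S p q where h: "a = ((M,S),(p,q))" "M \<in> matchings n" "S \<subseteq> occ132 M" "card S = m" "(p,q) \<in> M" "(p,q) \<notin> \<Union>(arcsOf ` S)"
      by (rule UU_E)
    have "expd ((M,S),(p,q)) \<in> TT n m" using expand_ok[OF h(2-6)] by (rule conjunct1)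
    then show "b \<in> TT n m" using h(1) a(2) by simp
  qed
qed

lemma AS_rec: "Suc m * card (AS (n+2) (Suc m)) = (n - 3*m) * card (AS n m)"
  using bij_betw_same_card[OF bij_TU[of n m]] card_TT card_UU by simp

lemma occ_small: assumes "M \<in> matchings n" "n < 2" shows "occ132 M = {}"
proof (rule ccontr)
  assume "occ132 M \<noteq> {}"
  then obtain i j where "(i,j) \<in> occ132 M" by auto
  then have "j \<ge> 3" "(i+2, j+3) \<in> M" unfolding occ132_def by auto
  moreover have "mo {1..2*n} M" using assms(1) matchings_mo by blast
  ultimately show False using mo_arc[of _ M "i+2" "j+3"] assms(2) by fastforce
qed

lemma card_AS_formula: "card (AS n m) = (n - 2*m choose m) * odd_dfact (n - 2*m)"
proof (induction m arbitrary: n)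
  case 0
  then show ?case using card_AS[of n 0] card_matchings by simp
next
  case (Suc m)
  show ?case
  proof (cases "n < 2")
    case True
    have "card (AS n (Suc m)) = 0" using card_AS[of n "Suc m"] occ_small[OF _ True]
      unfolding num_occ132_def by simp
    moreover have "n - 2 * Suc m = 0" using True by simp
    ultimately show ?thesis by simp
  next
    case False
    then obtain k where k: "n = k + 2" by (metis add.commute le_Suc_ex not_less numeral_2_eq_2 add_2_eq_Suc)
    define N where "N = k - 2*m"
    have "Suc m * card (AS n (Suc m)) = (k - 3*m) * ((N choose m) * odd_dfact N)"
      using AS_rec[of m k] Suc.IH[of k] k N_def by simp
    also have "\<dots> = ((N - m) * (N choose m)) * odd_dfact N" unfolding N_def by (simp add: mult.assoc)
    also have "\<dots> = (Suc m * (N choose Suc m)) * odd_dfact N"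
      by (simp only: binomial_absorb_comp binomial_absorption)
    finally have "card (AS n (Suc m)) = (N choose Suc m) * odd_dfact N"
      by (simp only: mult.assoc mult_left_cancel)
    moreover have "n - 2 * Suc m = N" unfolding N_def k by simp
    ultimately show ?thesis by simp
  qed
qed

lemma fcount: "(\<Sum>M\<in>matchings n. num_occ132 M choose m) = (n - 2*m choose m) * odd_dfact (n - 2*m)"
  using card_AS card_AS_formula by simp

unbundle fps_syntax

lemma occ_le: "M \<in> matchings n \<Longrightarrow> num_occ132 M \<le> n"
  unfolding num_occ132_def
  using card_inj_on_le[OF occ_inj occ_sub finite_M] card_M by metis

abbreviation tt :: "int poly" where "tt \<equiv> [:-1, 1:]"

lemma lhs: "D_fps $ n = (\<Sum>m=0..n. of_nat ((n - 2*m choose m) * odd_dfact (n - 2*m)) * tt ^ m)"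
proof -
  let ?x = "[:0, 1:] :: int poly"
  have "D_fps $ n = (\<Sum>k=0..n. of_nat (d132 n k) * ?x ^ k)"
    unfolding D_fps_def by (simp add: monom_altdef of_nat_mult_conv_smult)
  also have "\<dots> = (\<Sum>k=0..n. \<Sum>M\<in>{M \<in> matchings n. num_occ132 M = k}. ?x ^ num_occ132 M)"
    unfolding d132_def by (rule sum.cong) auto
  also have "\<dots> = (\<Sum>M\<in>matchings n. ?x ^ num_occ132 M)"
    by (rule sum.group) (use finite_matchings occ_le in auto)
  also have "\<dots> = (\<Sum>M\<in>matchings n. \<Sum>m=0..n. of_nat (num_occ132 M choose m) * tt ^ m)"
  proof (rule sum.cong)
    fix M assume M: "M \<in> matchings n"
    have "?x = tt + 1" by (simp add: one_pCons)
    then have "?x ^ num_occ132 M = (\<Sum>m=0..num_occ132 M. of_nat (num_occ132 M choose m) * tt ^ m)"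
      by (simp add: binomial_ring atLeast0AtMost)
    also have "\<dots> = (\<Sum>m=0..n. of_nat (num_occ132 M choose m) * tt ^ m)"
      by (rule sum.mono_neutral_left) (use occ_le[OF M] in auto)
    finally show "?x ^ num_occ132 M = (\<Sum>m=0..n. of_nat (num_occ132 M choose m) * tt ^ m)" .
  qed simp
  also have "\<dots> = (\<Sum>m=0..n. \<Sum>M\<in>matchings n. of_nat (num_occ132 M choose m) * tt ^ m)"
    by (rule sum.swap)
  also have "\<dots> = (\<Sum>m=0..n. of_nat (\<Sum>M\<in>matchings n. num_occ132 M choose m) * tt ^ m)"
    by (simp add: sum_distrib_right)
  also have "\<dots> = (\<Sum>m=0..n. of_nat ((n - 2*m choose m) * odd_dfact (n - 2*m)) * tt ^ m)"
    by (simp only: fcount)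
  finally show ?thesis .
qed

lemma Gpow: "(fps_X + fps_const tt * fps_X ^ 3) ^ i $ n =
  (\<Sum>m=0..i. if n = i + 2*m then of_nat (i choose m) * tt ^ m else 0)"
proof -
  have "(fps_X + fps_const tt * fps_X ^ 3) ^ i = (fps_const tt * fps_X ^ 3 + fps_X) ^ i"
    by (simp add: add.commute)
  also have "\<dots> = (\<Sum>m=0..i. of_nat (i choose m) * (fps_const tt * fps_X ^ 3) ^ m * fps_X ^ (i - m))"
    by (simp only: binomial_ring atLeast0AtMost)
  also have "\<dots> = (\<Sum>m=0..i. fps_const (of_nat (i choose m) * tt ^ m) * fps_X ^ (i + 2*m))"
  proof (rule sum.cong)
    fix m assume "m \<in> {0..i}"
    then have "3*m + (i - m) = i + 2*m" by auto
    then have "(fps_X::int poly fps) ^ (3*m) * fps_X ^ (i - m) = fps_X ^ (i + 2*m)"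
      by (metis power_add)
    then show "of_nat (i choose m) * (fps_const tt * fps_X ^ 3) ^ m * fps_X ^ (i - m) =
      fps_const (of_nat (i choose m) * tt ^ m) * fps_X ^ (i + 2*m)"
      by (simp add: power_mult_distrib power_mult fps_of_nat[symmetric] fps_const_mult[symmetric] mult.assoc
          del: fps_const_mult)
  qed simp
  finally show ?thesis by (simp add: fps_sum_nth fps_X_power_nth if_distrib cong: if_cong)
qed

lemma rhs: "(fps_compose F_fps (fps_X + fps_const tt * fps_X ^ 3)) $ n =
   (\<Sum>m=0..n. of_nat ((n - 2*m choose m) * odd_dfact (n - 2*m)) * tt ^ m)"
proof -
  define h where "h i m = (if n = i + 2*m then of_nat (odd_dfact i) * (of_nat (i choose m) * tt ^ m) else (0::int poly))" for i m
  have "(fps_compose F_fps (fps_X + fps_const tt * fps_X ^ 3)) $ n =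
      (\<Sum>i=0..n. of_nat (odd_dfact i) * (\<Sum>m=0..i. if n = i + 2*m then of_nat (i choose m) * tt ^ m else 0))"
    by (simp add: fps_compose_nth Gpow F_fps_def)
  also have "\<dots> = (\<Sum>i=0..n. \<Sum>m=0..i. h i m)"
    by (simp add: sum_distrib_left h_def if_distrib cong: if_cong)
  also have "\<dots> = (\<Sum>i=0..n. \<Sum>m=0..n. h i m)"
  proof (rule sum.cong)
    fix i assume "i \<in> {0..n}"
    then show "(\<Sum>m=0..i. h i m) = (\<Sum>m=0..n. h i m)"
      by (intro sum.mono_neutral_left) (auto simp: h_def)
  qed simp
  also have "\<dots> = (\<Sum>m=0..n. \<Sum>i=0..n. h i m)" by (rule sum.swap)
  also have "\<dots> = (\<Sum>m=0..n. of_nat ((n - 2*m choose m) * odd_dfact (n - 2*m)) * tt ^ m)"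
  proof (rule sum.cong)
    fix m assume "m \<in> {0..n}"
    have "(\<Sum>i=0..n. h i m) = (\<Sum>i=0..n. if i = n - 2*m then (if 2*m \<le> n then of_nat (odd_dfact (n-2*m)) * (of_nat (n - 2*m choose m) * tt ^ m) else 0) else 0)"
      by (rule sum.cong) (auto simp: h_def)
    also have "\<dots> = (if 2*m \<le> n then of_nat (odd_dfact (n-2*m)) * (of_nat (n - 2*m choose m) * tt ^ m) else 0)"
      by (simp add: sum.delta)
    also have "\<dots> = of_nat ((n - 2*m choose m) * odd_dfact (n - 2*m)) * tt ^ m"
      by (cases "2*m \<le> n") (auto simp: mult_ac)
    finally show "(\<Sum>i=0..n. h i m) = of_nat ((n - 2*m choose m) * odd_dfact (n - 2*m)) * tt ^ m" .
  qed simp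
  finally show ?thesis .
qed

theorem theorem4:
  shows "D_fps = fps_compose F_fps (fps_X + fps_const [:-1, 1:] * fps_X ^ 3)"
  by (rule fps_ext) (simp only: lhs rhs)

end
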